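(* Let $G$ be a connected graph on $n$ vertices and $m$ edges. If all the cycles of $G$ are pairwise vertex disjoint, then $G\in\mathcal{P}_n$.
   Context: Graphs are finite, simple and undirected. $\mathbb{T}=\{z\in\mathbb{C}:|z|=1\}$, $\mathbb{I}=[0,2\pi)$. A $\mathbb{T}$-gain on $G$ is a map $\varphi$ from oriented edges to $\mathbb{T}$ with $\varphi(\overrightarrow{e_{ts}})=\varphi(\overrightarrow{e_{st}})^{-1}$; $A(\Phi)$ for $\Phi=(G,\varphi)$ is the Hermitian matrix with $(s,t)$ entry $\varphi(\overrightarrow{e_{st}})$ if $v_s\sim v_t$, else $0$; $\mathcal{T}_G$ is the set of all $\mathbb{T}$-gain graphs on $G$. For a complex matrix $A=B+iC$ with $B,C$ real, $\Re(A)=B$, and $\Re(A)\ge0$ means all entries of $B$ are nonnegative. The gain of a directed cycle is the product of gains of its oriented edges. A rooted spanning tree $T$ with root $v_r$ induces the tree order ($v_x\le v_y$ iff $v_x$ is on the $T$-path from $v_r$ to $v_y$); $T$ is normal if adjacent vertices of $G$ are always comparable. The suitably oriented graph $\overrightarrow{G_T}$ orients each edge $e_{st}$ with $v_s\le v_t$ as $\overrightarrow{e_{st}}$ if $e_{st}\in E(T)$ and as $\overrightarrow{e_{ts}}$ otherwise; the $m-n+1$ fundamental cycles of $T$ become directed cycles $\overrightarrow{C_j(T)}$. For $r=(c_1,\dots,c_{m-n+1})\in\mathbb{I}^{m-n+1}$, $\mathcal{A}_T(r)=\{(G,\varphi)\in\mathcal{T}_G:\varphi(\overrightarrow{C_j(T)})=e^{ic_j}\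 \forall j\}$. A connected graph $G$ with normal spanning tree $T$ has property GNRP if for each $r\in\mathbb{I}^{m-n+1}$ there exists $\Phi\in\mathcal{A}_T(r)$ with $\Re(A(\Phi))\ge0$. $\mathcal{P}_n$ (or $\mathcal{P}$) is the collection of connected graphs on $n$ vertices with property GNRP. *)

theory Defs
  imports Complex_Main
begin

definition simple_graph :: "'a set \<Rightarrow> 'a set set \<Rightarrow> bool" where
  "simple_graph V E \<longleftrightarrow> finite V \<and>
     (\<forall>e\<in>E. \<exists>u v. u \<noteq> v \<and> u \<in> V \<and> v \<in> V \<and> e = {u, v})"

definition gpath :: "'a set set \<Rightarrow> 'a list \<Rightarrow> bool" where
  "gpath F xs \<longleftrightarrow> xs \<noteq> [] \<and> distinct xs \<and>
     (\<forall>i. Suc i < length xs \<longrightarrow> {xs ! i, xs ! Suc i} \<in> F)"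

definition connected_graph :: "'a set \<Rightarrow> 'a set set \<Rightarrow> bool" where
  "connected_graph V E \<longleftrightarrow> V \<noteq> {} \<and>
     (\<forall>u\<in>V. \<forall>v\<in>V. \<exists>xs. gpath E xs \<and> set xs \<subseteq> V \<and> hd xs = u \<and> last xs = v)"

definition is_cycle :: "'a set \<Rightarrow> 'a set set \<Rightarrow> 'a list \<Rightarrow> bool" where
  "is_cycle V F xs \<longleftrightarrow> length xs \<ge> 3 \<and> set xs \<subseteq> V \<and> gpath F xs \<and> {last xs, hd xs} \<in> F"

definition cycle_edges :: "'a list \<Rightarrow> 'a set set" where
  "cycle_edges xs = {{xs ! i, xs ! Suc i} | i. Suc i < length xs} \<union> {{last xs, hd xs}}"

definition cycles_vertex_disjoint :: "'a set \<Rightarrow> 'a set set \<Rightarrow> bool" where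
  "cycles_vertex_disjoint V E \<longleftrightarrow>
     (\<forall>xs ys. is_cycle V E xs \<and> is_cycle V E ys \<and> cycle_edges xs \<noteq> cycle_edges ys
        \<longrightarrow> set xs \<inter> set ys = {})"

definition rooted_spanning_tree :: "'a set \<Rightarrow> 'a set set \<Rightarrow> 'a set set \<Rightarrow> 'a \<Rightarrow> bool" where
  "rooted_spanning_tree V E T r \<longleftrightarrow> T \<subseteq> E \<and> r \<in> V \<and> connected_graph V T \<and>
     (\<nexists>xs. is_cycle V T xs)"

definition tree_le :: "'a set set \<Rightarrow> 'a \<Rightarrow> 'a \<Rightarrow> 'a \<Rightarrow> bool" where
  "tree_le T r x y \<longleftrightarrow> (\<exists>xs. gpath T xs \<and> hd xs = r \<and> last xs = y \<and> x \<in> set xs)"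

definition normal_spanning_tree :: "'a set \<Rightarrow> 'a set set \<Rightarrow> 'a set set \<Rightarrow> 'a \<Rightarrow> bool" where
  "normal_spanning_tree V E T r \<longleftrightarrow> rooted_spanning_tree V E T r \<and>
     (\<forall>s t. {s, t} \<in> E \<longrightarrow> tree_le T r s t \<or> tree_le T r t s)"

definition is_T_gain :: "'a set set \<Rightarrow> ('a \<Rightarrow> 'a \<Rightarrow> complex) \<Rightarrow> bool" where
  "is_T_gain E \<phi> \<longleftrightarrow> (\<forall>s t. {s, t} \<in> E \<longrightarrow> cmod (\<phi> s t) = 1 \<and> \<phi> t s = inverse (\<phi> s t))"

definition gain_adj :: "'a set set \<Rightarrow> ('a \<Rightarrow> 'a \<Rightarrow> complex) \<Rightarrow> 'a \<Rightarrow> 'a \<Rightarrow> complex" where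
  "gain_adj E \<phi> s t = (if {s, t} \<in> E then \<phi> s t else 0)"

text \<open>Gain of a directed closed walk given as the vertex list x0,...,xk,x0.\<close>
definition walk_gain :: "('a \<Rightarrow> 'a \<Rightarrow> complex) \<Rightarrow> 'a list \<Rightarrow> complex" where
  "walk_gain \<phi> ws = (\<Prod>i<length ws - 1. \<phi> (ws ! i) (ws ! Suc i))"

text \<open>The directed fundamental cycle of the non-tree edge e = {s,t}, s \<le> t, in the
  suitably oriented graph: the T-path s \<rightarrow> ... \<rightarrow> t (tree edges oriented downwards)
  followed by the oriented edge t \<rightarrow> s.\<close>
definition fund_dir_cycle :: "'a set set \<Rightarrow> 'a \<Rightarrow> 'a set \<Rightarrow> 'a list \<Rightarrow> bool" where
  "fund_dir_cycle T r e ws \<longleftrightarrow> (\<exists>s t xs. e = {s, t} \<and> tree_le T r s t \<and>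
      gpath T xs \<and> hd xs = s \<and> last xs = t \<and> ws = xs @ [s])"

text \<open>Property GNRP of G with respect to the normal spanning tree T rooted at r.
  The fundamental cycles are indexed by the non-tree edges E - T.\<close>
definition gnrp :: "'a set \<Rightarrow> 'a set set \<Rightarrow> 'a set set \<Rightarrow> 'a \<Rightarrow> bool" where
  "gnrp V E T r \<longleftrightarrow>
     (\<forall>c :: 'a set \<Rightarrow> real. (\<forall>e\<in>E - T. 0 \<le> c e \<and> c e < 2 * pi) \<longrightarrow>
        (\<exists>\<phi>. is_T_gain E \<phi> \<and>
             (\<forall>e\<in>E - T. \<forall>ws. fund_dir_cycle T r e ws \<longrightarrow>
                 walk_gain \<phi> ws = cis (c e)) \<and>
             (\<forall>s\<in>V. \<forall>t\<in>V. Re (gain_adj E \<phi> s t) \<ge> 0)))"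

definition in_P :: "nat \<Rightarrow> 'a set \<Rightarrow> 'a set set \<Rightarrow> bool" where
  "in_P n V E \<longleftrightarrow> simple_graph V E \<and> card V = n \<and> connected_graph V E \<and>
     (\<forall>T r. normal_spanning_tree V E T r \<longrightarrow> gnrp V E T r)"

end

theory Submission
  imports Defs
begin


lemma gpath_succ: "gpath F xs \<longleftrightarrow> xs \<noteq> [] \<and> distinct xs \<and> successively (\<lambda>x y. {x,y} \<in> F) xs"
  unfolding gpath_def successively_conv_nth by blast

lemma gpath_append_split:
  assumes "gpath F (xs1 @ w # xs2)"
  shows "gpath F (xs1 @ [w])" "gpath F (w # xs2)"
  using assms unfolding gpath_succ
  by (auto simp: successively_append_iff successively_Cons)

lemma distinct_hd_last: "distinct xs \<Longrightarrow> xs \<noteq> [] \<Longrightarrow> hd xs = last xs \<Longrightarrow> xs = [hd xs]"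
  by (cases xs) (auto simp: last_in_set split: if_splits)

lemma gpath_set_sub:
  assumes "gpath F xs" "hd xs \<in> V" "\<forall>e\<in>F. e \<subseteq> V"
  shows "set xs \<subseteq> V"
proof
  fix x assume "x \<in> set xs"
  then obtain i where i: "i < length xs" "x = xs ! i" by (auto simp: in_set_conv_nth)
  show "x \<in> V"
  proof (cases i)
    case 0 then show ?thesis using i assms by (simp add: hd_conv_nth)
  next
    case (Suc j)
    then have "{xs ! j, xs ! Suc j} \<in> F" using assms(1) i unfolding gpath_def by auto
    then show ?thesis using assms(3) i Suc by auto
  qed
qed

lemma path_unique:
  assumes F: "\<forall>e\<in>F. \<exists>u v. u\<noteq>v \<and> e = {u,v}"
    and acyc: "\<nexists>zs. is_cycle V F zs"
  shows "gpath F xs \<Longrightarrow> gpath F ys \<Longrightarrow> hd xs = hd ys \<Longrightarrow> last xs = last ys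
     \<Longrightarrow> set xs \<subseteq> V \<Longrightarrow> set ys \<subseteq> V \<Longrightarrow> xs = ys"
proof (induction "length xs + length ys" arbitrary: xs ys rule: less_induct)
  case less
  show ?case
  proof (rule ccontr)
    assume ne: "xs \<noteq> ys"
    define a where "a = hd xs"
    define b where "b = last xs"
    have xsne: "xs \<noteq> []" "distinct xs" and ysne: "ys \<noteq> []" "distinct ys"
      using less.prems unfolding gpath_def by auto
    have ab: "a \<noteq> b"
    proof
      assume "a = b"
      then have "xs = [a]" "ys = [a]" using distinct_hd_last[of xs] distinct_hd_last[of ys]
          xsne ysne less.prems unfolding a_def b_def by auto
      with ne show False by simp
    qed
    show False
    proof (cases "\<exists>w\<in>set xs \<inter> set ys. w \<noteq> a \<and> w \<noteq> b")
      case True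
      then obtain w where w: "w \<in> set xs" "w \<in> set ys" "w \<noteq> a" "w \<noteq> b" by auto
      obtain xs1 xs2 where xs: "xs = xs1 @ w # xs2" using w(1) split_list by metis
      obtain ys1 ys2 where ys: "ys = ys1 @ w # ys2" using w(2) split_list by metis
      have n1: "xs1 \<noteq> []" "ys1 \<noteq> []" using w less.prems xs ys unfolding a_def by auto
      have n2: "xs2 \<noteq> []" "ys2 \<noteq> []" using w less.prems xs ys unfolding b_def by auto
      have e1: "xs1 @ [w] = ys1 @ [w]"
        apply (rule less.hyps)
        using n2 xs ys less.prems gpath_append_split[of F xs1 w xs2] gpath_append_split[of F ys1 w ys2]
        by (auto simp: hd_append)
      have e2: "w # xs2 = w # ys2"
        apply (rule less.hyps)
        using n1 xs ys less.prems gpath_append_split[of F xs1 w xs2] gpath_append_split[of F ys1 w ys2]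
        by (auto simp: last_append)
      from e1 e2 xs ys ne show False by simp
    next
      case False
      then have disj: "\<And>w. w \<in> set xs \<Longrightarrow> w \<in> set ys \<Longrightarrow> w = a \<or> w = b" by blast
      obtain ys' where ys': "ys = a # ys'" using less.prems(3) ysne unfolding a_def by (cases ys) auto
      have "ys' \<noteq> []" using ys' ab less.prems(4) unfolding b_def by auto
      then obtain mid where mid: "ys' = mid @ [b]" using less.prems(4) ys' unfolding b_def
        by (metis append_butlast_last_id last_ConsR)
      define zs where "zs = xs @ rev mid"
      have ysd: "distinct (a # mid @ [b])" using ysne ys' mid by simp
      have midxs: "set mid \<inter> set xs = {}"
      proof -
        { fix w assume "w \<in> set mid" "w \<in> set xs"
          then have "w = a \<or> w = b" using disj ys' mid by auto
          with \<open>w \<in> set mid\<close> ysd have False by auto }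
        then show ?thesis by blast
      qed
      have sxs: "successively (\<lambda>x y. {x,y} \<in> F) xs" and sys: "successively (\<lambda>x y. {x,y} \<in> F) (a # mid @ [b])"
        using less.prems(1,2) ys' mid unfolding gpath_succ by auto
      have lastxs: "last xs = b" unfolding b_def ..
      have hdxs: "hd xs = a" unfolding a_def ..
      have gz: "gpath F zs"
        unfolding gpath_succ zs_def
        using xsne midxs ysd sxs sys lastxs
        by (auto simp: successively_append_iff successively_Cons insert_commute hd_rev last_rev)
      have cl: "{last zs, hd zs} \<in> F"
      proof (cases "mid = []")
        case True
        then have "{a, b} \<in> F" using sys by simp
        then show ?thesis using True xsne hdxs lastxs by (simp add: zs_def insert_commute)
      next
        case False
        then have "{a, hd mid} \<in> F" using sys by (cases mid) auto
        then show ?thesis using False xsne hdxs by (simp add: zs_def insert_commute last_rev)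
      qed
      have len: "length zs \<ge> 3"
      proof (cases "mid = []")
        case True
        have "length xs \<ge> 2" using ab xsne hdxs lastxs by (cases xs rule: remdups_adj.cases) auto
        moreover have "length xs \<noteq> 2"
        proof
          assume "length xs = 2"
          then obtain x y where "xs = [x,y]" by (cases xs rule: remdups_adj.cases) auto
          then have "xs = ys" using ys' mid True hdxs lastxs by simp
          with ne show False by simp
        qed
        ultimately show ?thesis unfolding zs_def by simp
      next
        case False
        have "length xs \<ge> 2" using ab xsne hdxs lastxs by (cases xs rule: remdups_adj.cases) auto
        then show ?thesis using False unfolding zs_def by (cases mid) auto
      qed
      have "set zs \<subseteq> V" using less.prems(5,6) ys' mid unfolding zs_def by auto
      then have "is_cycle V F zs" using len gz cl unfolding is_cycle_def by auto
      with acyc show False by blast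
    qed
  qed
qed



definition Wit :: "'a set set \<Rightarrow> 'a \<Rightarrow> 'a set \<Rightarrow> 'a \<times> 'a \<times> 'a list \<Rightarrow> bool" where
  "Wit T r e w \<longleftrightarrow> (case w of (s,t,xs) \<Rightarrow> e = {s,t} \<and> tree_le T r s t \<and> gpath T xs \<and> hd xs = s \<and> last xs = t)"

locale GS =
  fixes V :: "'a set" and E T r
  assumes sg: "simple_graph V E" and cvd: "cycles_vertex_disjoint V E"
    and nst: "normal_spanning_tree V E T r"
begin

lemma TE: "T \<subseteq> E" and rV: "r \<in> V" and acyc: "\<nexists>xs. is_cycle V T xs"
  using nst unfolding normal_spanning_tree_def rooted_spanning_tree_def by auto

lemma Eedge: "e \<in> E \<Longrightarrow> \<exists>u v. u \<noteq> v \<and> u \<in> V \<and> v \<in> V \<and> e = {u, v}"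
  using sg unfolding simple_graph_def by auto

lemma EV: "\<forall>e\<in>E. e \<subseteq> V" using Eedge by blast
lemma TV: "\<forall>e\<in>T. e \<subseteq> V" using EV TE by blast
lemma Tedge: "\<forall>e\<in>T. \<exists>u v. u\<noteq>v \<and> e = {u,v}" using Eedge TE by blast

lemma tree_le_antisym:
  assumes "tree_le T r s t" "tree_le T r t s" shows "s = t"
proof -
  obtain p1 where p1: "gpath T p1" "hd p1 = r" "last p1 = t" "s \<in> set p1"
    using assms(1) unfolding tree_le_def by auto
  obtain p2 where p2: "gpath T p2" "hd p2 = r" "last p2 = s" "t \<in> set p2"
    using assms(2) unfolding tree_le_def by auto
  obtain A B where AB: "p1 = A @ s # B" using p1(4) split_list by metis
  have gA: "gpath T (A @ [s])" using gpath_append_split(1) p1(1) AB by metis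
  have hA: "hd (A @ [s]) = r" using p1(2) AB by (cases A) auto
  have "A @ [s] = p2"
    apply (rule path_unique[OF Tedge acyc gA p2(1)])
    using hA p2 gpath_set_sub[OF gA _ TV] gpath_set_sub[OF p2(1) _ TV] rV by auto
  then have "t \<in> set A \<or> t = s" using p2(4) by auto
  moreover have "t \<notin> set A"
  proof
    assume "t \<in> set A"
    moreover have "t \<in> set (s # B)" using p1(3) AB by (metis last_appendR last_in_set list.distinct(1))
    ultimately show False using p1(1) AB unfolding gpath_def by auto
  qed
  ultimately show ?thesis by auto
qed

lemma cycle_edges_sub:
  assumes "gpath T xs" shows "cycle_edges xs \<subseteq> T \<union> {{last xs, hd xs}}"
  using assms unfolding cycle_edges_def gpath_def by auto

context
  fixes e s t xs
  assumes e: "e \<in> E - T" and w: "Wit T r e (s,t,xs)"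
begin

lemma w_props: "e = {s,t}" "tree_le T r s t" "gpath T xs" "hd xs = s" "last xs = t"
  using w unfolding Wit_def by auto

lemma st: "s \<noteq> t" "s \<in> V" "t \<in> V"
  using Eedge[of e] e w_props(1) by (auto simp: doubleton_eq_iff)

lemma wsetV: "set xs \<subseteq> V" using gpath_set_sub[OF w_props(3) _ TV] w_props st by auto

lemma wlen: "length xs \<ge> 3"
proof -
  have ne: "xs \<noteq> []" using w_props unfolding gpath_def by auto
  have "length xs \<noteq> 1" using ne w_props st by (cases xs) auto
  moreover have "length xs \<noteq> 2"
  proof
    assume "length xs = 2"
    then obtain x y where "xs = [x,y]" by (cases xs rule: remdups_adj.cases) auto
    then have "e \<in> T" using w_props unfolding gpath_def by auto
    with e show False by auto
  qed
  moreover have "length xs \<noteq> 0" using ne by simp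
  ultimately show ?thesis by linarith
qed

lemma wcyc: "is_cycle V E xs"
  unfolding is_cycle_def using wlen wsetV w_props TE e
  unfolding gpath_def by (auto simp: insert_commute)

lemma wce: "cycle_edges xs \<subseteq> T \<union> {e}" "e \<in> cycle_edges xs"
  using cycle_edges_sub[OF w_props(3)] w_props
  by (auto simp: cycle_edges_def insert_commute)

lemma wdist: "distinct xs" using w_props unfolding gpath_def by auto

lemma wnth: "xs ! 0 = s" "xs ! (length xs - 1) = t"
proof -
  have "xs \<noteq> []" using wlen by auto
  then show "xs ! 0 = s" "xs ! (length xs - 1) = t" using w_props by (auto simp: hd_conv_nth last_conv_nth)
qed

lemma x1: "xs ! 1 \<noteq> s" "xs ! 1 \<noteq> t" "xs ! 1 \<in> set xs"
proof -
  have "xs ! 1 \<noteq> xs ! 0" "xs ! 1 \<noteq> xs ! (length xs - 1)"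
    using wdist wlen by (subst nth_eq_iff_index_eq; force)+
  then show "xs ! 1 \<noteq> s" "xs ! 1 \<noteq> t" using wnth by auto
  show "xs ! 1 \<in> set xs" using wlen by auto
qed

end

lemma wit_same:
  assumes e: "e \<in> E - T" and w1: "Wit T r e (s,t,xs)" and w2: "Wit T r e (s',t',xs')"
  shows "s' = s" "t' = t" "xs' ! 1 = xs ! 1"
proof -
  have "{s,t} = {s',t'}" using w_props(1)[OF e w1] w_props(1)[OF e w2] by simp
  moreover have "\<not> (s' = t \<and> t' = s)"
    using tree_le_antisym[OF w_props(2)[OF e w1]] w_props(2)[OF e w2] st(1)[OF e w1] by auto
  ultimately show ss: "s' = s" "t' = t" by (auto simp: doubleton_eq_iff)
  have "cycle_edges xs = cycle_edges xs'"
  proof (rule ccontr)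
    assume "cycle_edges xs \<noteq> cycle_edges xs'"
    then have "set xs \<inter> set xs' = {}" using cvd wcyc[OF e w1] wcyc[OF e w2]
      unfolding cycles_vertex_disjoint_def by blast
    moreover have "s \<in> set xs" "s \<in> set xs'" using w_props(3,4)[OF e w1] w_props(3,4)[OF e w2] ss
      by (metis gpath_def hd_in_set)+
    ultimately show False by blast
  qed
  moreover have "{s, xs' ! 1} \<in> cycle_edges xs'"
    using wlen[OF e w2] wnth[OF e w2] ss unfolding cycle_edges_def by force
  ultimately have "{s, xs' ! 1} \<in> cycle_edges xs" by simp
  then consider i where "Suc i < length xs" "{s, xs' ! 1} = {xs ! i, xs ! Suc i}"
    | "{s, xs' ! 1} = {last xs, hd xs}" unfolding cycle_edges_def by blast
  then show "xs' ! 1 = xs ! 1"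
  proof cases
    case 1
    have "xs ! i = s \<or> xs ! Suc i = s" using 1(2) by (auto simp: doubleton_eq_iff)
    moreover have "xs ! Suc i \<noteq> xs ! 0" using wdist[OF e w1] 1(1)
      by (subst nth_eq_iff_index_eq; force)
    then have "xs ! Suc i \<noteq> s" using wnth[OF e w1] by simp
    ultimately have "xs ! i = xs ! 0" using wnth[OF e w1] by simp
    then have "i = 0" using wdist[OF e w1] 1(1)
      by (subst (asm) nth_eq_iff_index_eq; force)
    then show ?thesis using 1(2) x1(1)[OF e w2] ss wnth(1)[OF e w1] by (auto simp: doubleton_eq_iff)
  next
    case 2
    then have "xs' ! 1 = t" using w_props[OF e w1] x1(1)[OF e w2] ss by (auto simp: doubleton_eq_iff)
    then show ?thesis using x1(2)[OF e w2] ss by simp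
  qed
qed

lemma wit_disj:
  assumes e: "e \<in> E - T" and w1: "Wit T r e (s,t,xs)"
    and e': "e' \<in> E - T" and w2: "Wit T r e' (s',t',xs')" and ne: "e \<noteq> e'"
  shows "set xs \<inter> set xs' = {}"
proof -
  have "e' \<in> cycle_edges xs'" "e' \<notin> cycle_edges xs" using wce[OF e w1] wce[OF e' w2] e' ne by auto
  then have "cycle_edges xs \<noteq> cycle_edges xs'" by auto
  then show ?thesis using cvd wcyc[OF e w1] wcyc[OF e' w2]
      unfolding cycles_vertex_disjoint_def by blast
qed

end


definition hh :: "real \<Rightarrow> real" where
  "hh x = (if x \<le> pi then x / 2 else (x - 2 * pi) / 2)"

definition gterm :: "'a set set \<Rightarrow> 'a \<Rightarrow> ('a set \<Rightarrow> real) \<Rightarrow> 'a set \<Rightarrow> 'a \<Rightarrow> 'a \<Rightarrow> real" where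
  "gterm T r c e u v = (if \<exists>w. Wit T r e w then (case SOME w. Wit T r e w of (s,t,xs) \<Rightarrow>
      hh (c e) * (of_bool ((u,v) = (t,s)) + of_bool ((u,v) = (s, xs!1))
                 - of_bool ((v,u) = (t,s)) - of_bool ((v,u) = (s, xs!1)))) else 0)"

definition ang :: "'a set set \<Rightarrow> 'a set set \<Rightarrow> 'a \<Rightarrow> ('a set \<Rightarrow> real) \<Rightarrow> 'a \<Rightarrow> 'a \<Rightarrow> real" where
  "ang E T r c u v = (\<Sum>e\<in>E - T. gterm T r c e u v)"

lemma gterm_anti: "gterm T r c e v u = - gterm T r c e u v"
  unfolding gterm_def by (auto split: prod.splits simp: algebra_simps)

lemma ang_anti: "ang E T r c v u = - ang E T r c u v"
  unfolding ang_def by (simp only: gterm_anti[of T r c _ v u] sum_negf)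

lemma hh_cis: "cis (2 * hh x) = cis x"
proof (cases "x \<le> pi")
  case True
  then have "2 * hh x = x" unfolding hh_def by simp
  then show ?thesis by simp
next
  case False
  then have "2 * hh x = x - 2 * pi" unfolding hh_def by simp
  moreover have "cis (x - 2 * pi) = cis x" by (simp add: cis_divide[symmetric])
  ultimately show ?thesis by simp
qed

lemma hh_bound: "0 \<le> x \<Longrightarrow> x < 2 * pi \<Longrightarrow> \<bar>hh x\<bar> \<le> pi / 2"
  unfolding hh_def by auto

lemma prod_cis: "finite A \<Longrightarrow> (\<Prod>i\<in>A. cis (f i)) = cis (\<Sum>i\<in>A. f i)"
  by (induction A rule: finite_induct) (auto simp: cis_mult)

lemma sum_single:
  assumes "finite A" "\<And>x y. x \<in> A \<Longrightarrow> y \<in> A \<Longrightarrow> f x \<noteq> 0 \<Longrightarrow> f y \<noteq> 0 \<Longrightarrow> x = y"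
  shows "sum f A = 0 \<or> (\<exists>x\<in>A. sum f A = f x)"
proof (cases "\<exists>x\<in>A. f x \<noteq> 0")
  case True
  then obtain x where x: "x \<in> A" "f x \<noteq> 0" by auto
  have "sum f A = f x + sum f (A - {x})" using sum.remove[OF assms(1) x(1)] .
  moreover have "sum f (A - {x}) = 0" using assms(2) x by (intro sum.neutral) blast
  ultimately show ?thesis using x by auto
qed auto

lemma abs4: "(a::real) + b \<le> 1 \<Longrightarrow> c + d \<le> 1 \<Longrightarrow> 0 \<le> a \<Longrightarrow> 0 \<le> b \<Longrightarrow> 0 \<le> c \<Longrightarrow> 0 \<le> d
  \<Longrightarrow> \<bar>a + b - c - d\<bar> \<le> 1"
  by (simp only: abs_le_iff) linarith

lemma ofb: "0 \<le> (of_bool P :: real)" by (cases P) simp_all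

context GS begin

lemma finE: "finite E"
proof -
  have "E \<subseteq> Pow V" using EV by auto
  moreover have "finite V" using sg unfolding simple_graph_def by auto
  ultimately show ?thesis using finite_subset by blast
qed

lemma gterm_eval:
  assumes e: "e \<in> E - T" and w: "Wit T r e (s,t,xs)"
  shows "gterm T r c e u v = hh (c e) * (of_bool ((u,v) = (t,s)) + of_bool ((u,v) = (s, xs!1))
                 - of_bool ((v,u) = (t,s)) - of_bool ((v,u) = (s, xs!1)))"
proof -
  have ex: "\<exists>w. Wit T r e w" using w by blast
  obtain s0 t0 xs0 where w0: "(SOME w. Wit T r e w) = (s0,t0,xs0)" by (metis prod_cases3)
  have "Wit T r e (s0,t0,xs0)" using someI_ex[OF ex] w0 by simp
  from wit_same[OF e w this] have "s0 = s" "t0 = t" "xs0 ! 1 = xs ! 1" by auto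
  then show ?thesis unfolding gterm_def using ex w0 by simp
qed

lemma gterm_nz:
  assumes "gterm T r c e u v \<noteq> 0" "e \<in> E - T"
  shows "\<exists>s t xs. Wit T r e (s,t,xs) \<and> u \<in> set xs"
proof -
  have ex: "\<exists>w. Wit T r e w" using assms unfolding gterm_def by (auto split: if_splits)
  then obtain s t xs where w: "Wit T r e (s,t,xs)" by (metis prod_cases3)
  have "u = t \<or> u = s \<or> u = xs ! 1" using assms(1) gterm_eval[OF assms(2) w, of c u v]
    by (auto simp: of_bool_def split: if_splits)
  moreover have "t \<in> set xs" "s \<in> set xs" using w_props[OF assms(2) w] 
    by (metis gpath_def hd_in_set last_in_set)+
  ultimately show ?thesis using w x1(3)[OF assms(2) w] by blast
qed

lemma gterm_bound:
  assumes "e \<in> E - T" "0 \<le> c e" "c e < 2 * pi"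
  shows "\<bar>gterm T r c e u v\<bar> \<le> pi / 2"
proof (cases "\<exists>w. Wit T r e w")
  case True
  then obtain s t xs where w: "Wit T r e (s,t,xs)" by (metis prod_cases3)
  have d: "s \<noteq> t" "xs ! 1 \<noteq> s" "xs ! 1 \<noteq> t" using st[OF assms(1) w] x1[OF assms(1) w] by auto
  define k where "k = of_bool ((u,v) = (t,s)) + of_bool ((u,v) = (s, xs!1))
                 - of_bool ((v,u) = (t,s)) - (of_bool ((v,u) = (s, xs!1)) :: real)"
  have a: "of_bool ((u,v) = (t,s)) + of_bool ((u,v) = (s, xs!1)) \<le> (1::real)"
    using d(1) by (cases "(u,v) = (t,s)") auto
  have b: "of_bool ((v,u) = (t,s)) + of_bool ((v,u) = (s, xs!1)) \<le> (1::real)"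
    using d(1) by (cases "(v,u) = (t,s)") auto
  have "\<bar>k\<bar> \<le> 1" unfolding k_def by (rule abs4[OF a b ofb ofb ofb ofb])
  have hb: "\<bar>hh (c e)\<bar> \<le> pi / 2" using hh_bound assms(2,3) by blast
  have "\<bar>hh (c e)\<bar> * \<bar>k\<bar> \<le> pi / 2 * 1"
    by (rule mult_mono[OF hb \<open>\<bar>k\<bar> \<le> 1\<close>]) auto
  moreover have "gterm T r c e u v = hh (c e) * k" unfolding k_def by (rule gterm_eval[OF assms(1) w])
  ultimately show ?thesis by (simp add: abs_mult)
qed (simp add: gterm_def)

lemma ang_bound:
  assumes "\<forall>e\<in>E - T. 0 \<le> c e \<and> c e < 2 * pi"
  shows "\<bar>ang E T r c u v\<bar> \<le> pi / 2"
proof -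
  have "(\<Sum>e\<in>E - T. gterm T r c e u v) = 0 \<or> (\<exists>x\<in>E - T. (\<Sum>e\<in>E - T. gterm T r c e u v) = gterm T r c x u v)"
  proof (rule sum_single)
    show "finite (E - T)" using finE by auto
    fix x y assume xy: "x \<in> E - T" "y \<in> E - T" "gterm T r c x u v \<noteq> 0" "gterm T r c y u v \<noteq> 0"
    obtain s t xs where 1: "Wit T r x (s,t,xs)" "u \<in> set xs" using gterm_nz xy by blast
    obtain s' t' xs' where 2: "Wit T r y (s',t',xs')" "u \<in> set xs'" using gterm_nz xy by blast
    show "x = y" using wit_disj[OF xy(1) 1(1) xy(2) 2(1)] 1(2) 2(2) by blast
  qed
  then show ?thesis unfolding ang_def using gterm_bound assms by auto
qed

lemma ang_walk:
  assumes e: "e \<in> E - T" and w: "Wit T r e (s,t,xs)" and i: "i < length xs"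
  shows "ang E T r c ((xs @ [s]) ! i) ((xs @ [s]) ! Suc i) = (if i = 0 \<or> i = length xs - 1 then hh (c e) else 0)"
proof -
  define u where "u = (xs @ [s]) ! i"
  define v where "v = (xs @ [s]) ! Suc i"
  have L: "length xs \<ge> 3" using wlen[OF e w] .
  have dx: "distinct xs" using wdist[OF e w] .
  have n: "xs ! 0 = s" "xs ! (length xs - 1) = t" using wnth[OF e w] by auto
  have u: "u = xs ! i" unfolding u_def using i by (simp add: nth_append)
  have uin: "u \<in> set xs" using u i by simp
  have "ang E T r c u v = gterm T r c e u v"
  proof -
    have "(\<Sum>e'\<in>E - T. gterm T r c e' u v) = gterm T r c e u v + (\<Sum>e'\<in>E - T - {e}. gterm T r c e' u v)"
      using sum.remove[of "E - T" e] finE e by auto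
    moreover have "(\<Sum>e'\<in>E - T - {e}. gterm T r c e' u v) = 0"
    proof (rule sum.neutral, rule ballI, rule ccontr)
      fix e' assume e': "e' \<in> E - T - {e}" "gterm T r c e' u v \<noteq> 0"
      then obtain s' t' xs' where "Wit T r e' (s',t',xs')" "u \<in> set xs'" using gterm_nz by blast
      then show False using wit_disj[OF e w, of e' s' t' xs'] e' uin by blast
    qed
    ultimately show ?thesis unfolding ang_def by simp
  qed
  also have "\<dots> = (if i = 0 \<or> i = length xs - 1 then hh (c e) else 0)"
  proof -
    have neq: "\<And>a b. a < length xs \<Longrightarrow> b < length xs \<Longrightarrow> xs ! a = xs ! b \<longleftrightarrow> a = b"
      using dx by (simp add: nth_eq_iff_index_eq)
    have st: "s \<noteq> t" using st[OF e w] by simp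
    consider "i = length xs - 1" | "i = 0" | "0 < i" "i < length xs - 1" using i L by linarith
    then show ?thesis
    proof cases
      case 1
      then have "u = t" "v = s" using u n i unfolding v_def by (auto simp: nth_append)
      moreover have "xs ! 1 \<noteq> t" using x1[OF e w] by simp
      ultimately show ?thesis using gterm_eval[OF e w] 1 L st by auto
    next
      case 2
      then have "u = s" "v = xs ! 1" using u n i L unfolding v_def by (auto simp: nth_append)
      moreover have "xs ! 1 \<noteq> t" "xs ! 1 \<noteq> s" using x1[OF e w] by auto
      ultimately show ?thesis using gterm_eval[OF e w] 2 L st by auto
    next
      case 3
      then have v: "v = xs ! Suc i" unfolding v_def by (auto simp: nth_append)
      have l0: "0 < length xs" "length xs - 1 < length xs" "Suc i < length xs" using L 3 by auto
      have "xs ! i \<noteq> xs ! 0" using neq[OF i l0(1)] 3 by simp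
      moreover have "xs ! i \<noteq> xs ! (length xs - 1)" using neq[OF i l0(2)] 3 by simp
      moreover have "xs ! Suc i \<noteq> xs ! 0" using neq[OF l0(3) l0(1)] by simp
      ultimately have "u \<noteq> t" "u \<noteq> s" "v \<noteq> s" using u v n by auto
      then show ?thesis using gterm_eval[OF e w] 3 by auto
    qed
  qed
  finally show ?thesis unfolding u_def v_def .
qed

end


lemma sum_two_ends:
  assumes "(2::nat) \<le> L"
  shows "(\<Sum>i<L. if i = 0 \<or> i = L - 1 then h else 0) = 2 * (h::real)"
proof -
  have "(\<Sum>i<L. if i = 0 \<or> i = L - 1 then h else 0) = (\<Sum>i\<in>{0, L - 1}. if i = 0 \<or> i = L - 1 then h else 0)"
    using assms by (intro sum.mono_neutral_right) auto
  also have "\<dots> = 2 * h" using assms by simp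
  finally show ?thesis .
qed

context GS begin

lemma gnrp_holds: "gnrp V E T r"
  unfolding gnrp_def
proof (intro allI impI)
  fix c :: "'a set \<Rightarrow> real"
  assume c: "\<forall>e\<in>E - T. 0 \<le> c e \<and> c e < 2 * pi"
  define \<phi> where "\<phi> = (\<lambda>u v. cis (ang E T r c u v))"
  have g: "is_T_gain E \<phi>"
    unfolding is_T_gain_def \<phi>_def
  proof (intro allI impI conjI)
    fix s t
    show "cmod (cis (ang E T r c s t)) = 1" by simp
    have "ang E T r c t s = - ang E T r c s t" by (rule ang_anti)
    then show "cis (ang E T r c t s) = inverse (cis (ang E T r c s t))" by simp
  qed
  have w: "walk_gain \<phi> ws = cis (c e)" if e: "e \<in> E - T" and f: "fund_dir_cycle T r e ws" for e ws
  proof -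
    obtain s t xs where wt: "Wit T r e (s,t,xs)" and ws: "ws = xs @ [s]"
      using f unfolding fund_dir_cycle_def Wit_def by auto
    have L: "length xs \<ge> 3" using wlen[OF e wt] .
    have "walk_gain \<phi> ws = (\<Prod>i<length xs. cis (ang E T r c (ws ! i) (ws ! Suc i)))"
      unfolding walk_gain_def \<phi>_def ws by simp
    also have "\<dots> = cis (\<Sum>i<length xs. ang E T r c (ws ! i) (ws ! Suc i))"
      by (rule prod_cis) simp
    also have "(\<Sum>i<length xs. ang E T r c (ws ! i) (ws ! Suc i))
        = (\<Sum>i<length xs. if i = 0 \<or> i = length xs - 1 then hh (c e) else 0)"
      unfolding ws by (intro sum.cong refl ang_walk[OF e wt]) simp
    also have "\<dots> = 2 * hh (c e)" using L by (intro sum_two_ends) simp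
    finally show ?thesis by (simp add: hh_cis)
  qed
  have re: "Re (gain_adj E \<phi> s t) \<ge> 0" for s t
  proof -
    have "\<bar>ang E T r c s t\<bar> \<le> pi / 2" using ang_bound[OF c] .
    then have "0 \<le> cos (ang E T r c s t)" by (intro cos_ge_zero) auto
    then show ?thesis unfolding gain_adj_def \<phi>_def by simp
  qed
  show "\<exists>\<phi>. is_T_gain E \<phi> \<and>
             (\<forall>e\<in>E - T. \<forall>ws. fund_dir_cycle T r e ws \<longrightarrow> walk_gain \<phi> ws = cis (c e)) \<and>
             (\<forall>s\<in>V. \<forall>t\<in>V. Re (gain_adj E \<phi> s t) \<ge> 0)"
    using g w re by blast
qed

end

theorem theorem4p1:
  fixes V :: "'a set" and E :: "'a set set" and n :: nat
  assumes "simple_graph V E"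
    and "card V = n"
    and "connected_graph V E"
    and "cycles_vertex_disjoint V E"
  shows "in_P n V E"
  unfolding in_P_def
proof (intro conjI allI impI)
  fix T r assume "normal_spanning_tree V E T r"
  then interpret GS V E T r using assms by unfold_locales auto
  show "gnrp V E T r" by (rule gnrp_holds)
qed (use assms in auto)


end
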